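(* Let $G$ be a convergence group and $\tau(G)$ its locally quasi-convex modification. Then $\Gamma G$ and $\Gamma\tau(G)$ have the same equicontinuous subsets. That is, a set $H$ of characters is an equicontinuous subset of $\Gamma G$ if and only if it is an equicontinuous subset of $\Gamma\tau(G)$.
   Context: All groups are abelian. A convergence group is an abelian group with a convergence structure (an assignment to each point $x$ of a collection of filters converging to $x$). This assignment must satisfy three conditions: point ultrafilters converge to their point; finite intersections of filters converging to $x$ converge to $x$; and finer filters converge. The group operation must be compatible: $\mathcal F\to x$, $\mathcal G\to y$ imply $\mathcal F-\mathcal G\to x-y$. Topological groups are convergence groups. $\mathbb T=\mathbb R/\mathbb Z$, $\mathbb T_+=\rho([-1/4,1/4])$ where $\rho:\mathbb R\to\mathbb T$ is the quotient map. $\Gamma G$ is the group of continuous homomorphisms $G\to\mathbb T$. A set $M\subseteq\Gamma G$ is equicontinuous if for every filter $\mathcal F\to0$ in $G$, the filter generated by $\{\varphi(x):\varphi\in M,x\in F\}$, $F\in\mathcal F$, converges to $0$ in $\mathbb T$. A subset $A$ of a topological group $G$ is quasi-convex if for every $x\notin A$ there is a continuous character $\varphi$ with $\varphi(A)\subseteq\mathbb T_+$ and $\varphi(x)\notin\mathbb T_+$. A topological group is locally quasi-convex if it has a zero neighbourhood base of quasi-convex sets. The locally quasi-convex modification $\tau(G)$ of a convergence group $G$ is the finest locally quasi-convex group topology on $G$ coarser than the convergence structure of $G$, i.e. such that the identity $G\to\tau(G)$ is continuous. *)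

theory Defs
  imports "HOL-Analysis.Analysis"
begin

text \<open>We model T = R/Z as the unit circle of the complex plane; the quotient
  map rho : R -> T is t |-> exp(2 pi i t) (surjective onto the circle, kernel Z),
  the group operation of T is complex multiplication (the neutral element 0 of
  R/Z corresponds to 1), and the topology is the subspace topology of C.\<close>

definition circleT :: "complex set" where
  "circleT = {z. norm z = 1}"

definition rho :: "real \<Rightarrow> complex" where
  "rho t = cis (2 * pi * t)"

definition Tplus :: "complex set" where
  "Tplus = rho ` {-1/4..1/4}"

text \<open>In Isabelle's filter order
  F \<le> G means F is finer than G, and sup F G is the filter of sets belonging to
  both F and G (the intersection of the two filters).\<close>

definition conv_group :: "('a::ab_group_add filter \<Rightarrow> 'a \<Rightarrow> bool) \<Rightarrow> bool" where
  "conv_group conv \<longleftrightarrow>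
     (\<forall>x. conv (principal {x}) x) \<and>
     (\<forall>F G x. conv F x \<and> conv G x \<longrightarrow> conv (sup F G) x) \<and>
     (\<forall>F G x. conv F x \<and> G \<le> F \<longrightarrow> conv G x) \<and>
     (\<forall>F G x y. conv F x \<and> conv G y \<longrightarrow>
        conv (filtermap (\<lambda>(a, b). a - b) (F \<times>\<^sub>F G)) (x - y))"

definition top_conv :: "'a topology \<Rightarrow> 'a filter \<Rightarrow> 'a \<Rightarrow> bool" where
  "top_conv T F x \<longleftrightarrow> limitin T (\<lambda>y. y) x F"

definition characters ::
  "('a::ab_group_add filter \<Rightarrow> 'a \<Rightarrow> bool) \<Rightarrow> ('a \<Rightarrow> complex) set" where
  "characters conv =
     {\<phi>. (\<forall>x. \<phi> x \<in> circleT) \<and> (\<forall>x y. \<phi> (x + y) = \<phi> x * \<phi> y) \<and>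
          (\<forall>F x. conv F x \<longrightarrow> (\<phi> \<longlongrightarrow> \<phi> x) F)}"

definition equicontinuous_set ::
  "('a::ab_group_add filter \<Rightarrow> 'a \<Rightarrow> bool) \<Rightarrow> ('a \<Rightarrow> complex) set \<Rightarrow> bool" where
  "equicontinuous_set conv M \<longleftrightarrow>
     M \<subseteq> characters conv \<and>
     (\<forall>F. conv F 0 \<longrightarrow>
        (\<forall>U. open U \<and> 1 \<in> U \<longrightarrow>
           (\<exists>A. eventually (\<lambda>x. x \<in> A) F \<and> {\<phi> x | \<phi> x. \<phi> \<in> M \<and> x \<in> A} \<subseteq> U)))"

definition group_topology :: "'a::ab_group_add topology \<Rightarrow> bool" where
  "group_topology T \<longleftrightarrow> topspace T = UNIV \<and>
     continuous_map (prod_topology T T) T (\<lambda>(x, y). x - y)"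

definition zero_nhd :: "'a::ab_group_add topology \<Rightarrow> 'a set \<Rightarrow> bool" where
  "zero_nhd T V \<longleftrightarrow> (\<exists>W. openin T W \<and> 0 \<in> W \<and> W \<subseteq> V)"

definition quasi_convex :: "'a::ab_group_add topology \<Rightarrow> 'a set \<Rightarrow> bool" where
  "quasi_convex T A \<longleftrightarrow>
     (\<forall>x. x \<notin> A \<longrightarrow>
        (\<exists>\<phi>\<in>characters (top_conv T). \<phi> ` A \<subseteq> Tplus \<and> \<phi> x \<notin> Tplus))"

definition locally_quasi_convex :: "'a::ab_group_add topology \<Rightarrow> bool" where
  "locally_quasi_convex T \<longleftrightarrow>
     (\<forall>U. zero_nhd T U \<longrightarrow> (\<exists>V. zero_nhd T V \<and> quasi_convex T V \<and> V \<subseteq> U))"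

definition coarser_than_conv ::
  "('a filter \<Rightarrow> 'a \<Rightarrow> bool) \<Rightarrow> 'a topology \<Rightarrow> bool" where
  "coarser_than_conv conv T \<longleftrightarrow> (\<forall>F x. conv F x \<longrightarrow> limitin T (\<lambda>y. y) x F)"

definition lqc_modification ::
  "('a::ab_group_add filter \<Rightarrow> 'a \<Rightarrow> bool) \<Rightarrow> 'a topology \<Rightarrow> bool" where
  "lqc_modification conv T \<longleftrightarrow>
     group_topology T \<and> locally_quasi_convex T \<and> coarser_than_conv conv T \<and>
     (\<forall>T'. group_topology T' \<and> locally_quasi_convex T' \<and> coarser_than_conv conv T'
           \<longrightarrow> (\<forall>U. openin T' U \<longrightarrow> openin T U))"

end

theory Submission
  imports Defs
begin

definition Hopen :: "('a \<Rightarrow> complex) set \<Rightarrow> 'a set \<Rightarrow> bool" where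
  "Hopen H U \<longleftrightarrow> (\<forall>x\<in>U. \<exists>e>0. \<forall>y. (\<forall>\<phi>\<in>H. cmod (\<phi> y - \<phi> x) \<le> e) \<longrightarrow> y \<in> U)"

definition HT :: "('a \<Rightarrow> complex) set \<Rightarrow> 'a topology" where
  "HT H = topology (Hopen H)"

definition ob :: "('a \<Rightarrow> complex) set \<Rightarrow> 'a \<Rightarrow> real \<Rightarrow> 'a set" where
  "ob H x e = {y. \<exists>e'. 0 \<le> e' \<and> e' < e \<and> (\<forall>\<phi>\<in>H. cmod (\<phi> y - \<phi> x) \<le> e')}"

lemma istop_Hopen: "istopology (Hopen H)"
  unfolding istopology_def
proof (intro conjI allI impI)
  fix S T assume S: "Hopen H S" and T: "Hopen H T"
  show "Hopen H (S \<inter> T)" unfolding Hopen_def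
  proof
    fix x assume x: "x \<in> S \<inter> T"
    obtain e1 where "e1 > 0"
      and 1: "\<forall>y. (\<forall>\<phi>\<in>H. cmod (\<phi> y - \<phi> x) \<le> e1) \<longrightarrow> y \<in> S"
      using S x unfolding Hopen_def by auto
    obtain e2 where "e2 > 0"
      and 2: "\<forall>y. (\<forall>\<phi>\<in>H. cmod (\<phi> y - \<phi> x) \<le> e2) \<longrightarrow> y \<in> T"
      using T x unfolding Hopen_def by auto
    show "\<exists>e>0. \<forall>y. (\<forall>\<phi>\<in>H. cmod (\<phi> y - \<phi> x) \<le> e) \<longrightarrow> y \<in> S \<inter> T"
    proof (intro exI conjI allI impI)
      show "min e1 e2 > 0" using \<open>e1 > 0\<close> \<open>e2 > 0\<close> by simp
      fix y assume y: "\<forall>\<phi>\<in>H. cmod (\<phi> y - \<phi> x) \<le> min e1 e2"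
      then have "\<forall>\<phi>\<in>H. cmod (\<phi> y - \<phi> x) \<le> e1" "\<forall>\<phi>\<in>H. cmod (\<phi> y - \<phi> x) \<le> e2"
        by auto
      then show "y \<in> S \<inter> T" using 1 2 by simp
    qed
  qed
next
  fix K assume K: "\<forall>S\<in>K. Hopen H S"
  show "Hopen H (\<Union>K)" unfolding Hopen_def
  proof
    fix x assume "x \<in> \<Union>K"
    then obtain S where "S \<in> K" "x \<in> S" by auto
    have SH: "Hopen H S" using K \<open>S \<in> K\<close> by blast
    obtain e where "e > 0" and 1: "\<forall>y. (\<forall>\<phi>\<in>H. cmod (\<phi> y - \<phi> x) \<le> e) \<longrightarrow> y \<in> S"
      using SH \<open>x \<in> S\<close> unfolding Hopen_def by auto
    then show "\<exists>e>0. \<forall>y. (\<forall>\<phi>\<in>H. cmod (\<phi> y - \<phi> x) \<le> e) \<longrightarrow> y \<in> \<Union>K"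
      using \<open>S \<in> K\<close> by auto
  qed
qed

lemma openin_HT: "openin (HT H) U = Hopen H U"
  by (simp add: HT_def istop_Hopen)

lemma topspace_HT[simp]: "topspace (HT H) = UNIV"
proof -
  have "Hopen H UNIV" unfolding Hopen_def by (auto intro: exI[of _ 1])
  then show ?thesis by (metis openin_HT openin_subset top.extremum_uniqueI)
qed

lemma ob_open: "Hopen H (ob H x e)"
  unfolding Hopen_def
proof
  fix y assume "y \<in> ob H x e"
  then obtain e' where e': "0 \<le> e'" "e' < e" "\<forall>\<phi>\<in>H. cmod (\<phi> y - \<phi> x) \<le> e'"
    unfolding ob_def by blast
  show "\<exists>d>0. \<forall>z. (\<forall>\<phi>\<in>H. cmod (\<phi> z - \<phi> y) \<le> d) \<longrightarrow> z \<in> ob H x e"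
  proof (intro exI conjI allI impI)
    show "(e - e')/2 > 0" using e' by simp
    fix z assume z: "\<forall>\<phi>\<in>H. cmod (\<phi> z - \<phi> y) \<le> (e - e')/2"
    have "\<forall>\<phi>\<in>H. cmod (\<phi> z - \<phi> x) \<le> e' + (e - e')/2"
    proof
      fix \<phi> assume "\<phi> \<in> H"
      have "cmod (\<phi> z - \<phi> x) \<le> cmod (\<phi> z - \<phi> y) + cmod (\<phi> y - \<phi> x)"
        by (metis diff_add_cancel add_diff_eq norm_triangle_ineq)
      moreover have "cmod (\<phi> z - \<phi> y) \<le> (e - e')/2" "cmod (\<phi> y - \<phi> x) \<le> e'"
        using z e' \<open>\<phi>\<in>H\<close> by auto
      ultimately show "cmod (\<phi> z - \<phi> x) \<le> e' + (e - e')/2" by linarith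
    qed
    moreover have "e' + (e - e')/2 < e" using e'(2) by (simp add: field_simps)
    moreover have "0 \<le> e' + (e - e')/2" using e'(1,2) by (simp add: field_simps)
    ultimately show "z \<in> ob H x e" unfolding ob_def by blast
  qed
qed

lemma ob_center: "e > 0 \<Longrightarrow> x \<in> ob H x e"
  unfolding ob_def by (intro CollectI exI[of _ 0]) simp

lemma Hopen_nhd: assumes "Hopen H U" "x \<in> U" shows "\<exists>e>0. ob H x e \<subseteq> U"
proof -
  obtain e where e: "e > 0" "\<forall>y. (\<forall>\<phi>\<in>H. cmod (\<phi> y - \<phi> x) \<le> e) \<longrightarrow> y \<in> U"
    using assms unfolding Hopen_def by blast
  have "ob H x e \<subseteq> U"
  proof
    fix y assume "y \<in> ob H x e"
    then obtain e' where "e' < e" "\<forall>\<phi>\<in>H. cmod (\<phi> y - \<phi> x) \<le> e'" unfolding ob_def by blast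
    then have "\<forall>\<phi>\<in>H. cmod (\<phi> y - \<phi> x) \<le> e" by force
    then show "y \<in> U" using e by blast
  qed
  then show ?thesis using e by blast
qed

lemma limitin_HT:
  assumes "limitin (HT H) (\<lambda>y. y) x F" "\<phi> \<in> H"
  shows "(\<phi> \<longlongrightarrow> \<phi> x) F"
proof (rule tendstoI)
  fix e :: real assume "e > 0"
  have o: "openin (HT H) (ob H x e)" by (simp add: openin_HT ob_open)
  have xo: "x \<in> ob H x e" by (rule ob_center[OF \<open>e > 0\<close>])
  have "\<forall>U. openin (HT H) U \<and> x \<in> U \<longrightarrow> eventually (\<lambda>y. y \<in> U) F"
    using assms(1) unfolding limitin_def by (rule conjunct2)
  then have ev: "eventually (\<lambda>y. y \<in> ob H x e) F"
    using o xo by simp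
  have im: "dist (\<phi> y) (\<phi> x) < e" if "y \<in> ob H x e" for y
  proof -
    have "\<exists>e'. 0 \<le> e' \<and> e' < e \<and> (\<forall>\<phi>\<in>H. cmod (\<phi> y - \<phi> x) \<le> e')"
      using that unfolding ob_def by (rule CollectD)
    then obtain e' where "e' < e" "\<forall>\<phi>\<in>H. cmod (\<phi> y - \<phi> x) \<le> e'" by blast
    then have "cmod (\<phi> y - \<phi> x) \<le> e'" using assms(2) by blast
    then show "dist (\<phi> y) (\<phi> x) < e" using \<open>e' < e\<close> by (simp add: dist_norm)
  qed
  show "eventually (\<lambda>y. dist (\<phi> y) (\<phi> x) < e) F"
    using ev im by (rule eventually_mono)
qed

lemma Tplus_Re: "w \<in> Tplus \<Longrightarrow> Re w \<ge> 0"
proof -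
  assume "w \<in> Tplus"
  then obtain t where t: "t \<in> {-1/4..1/4}" "w = cis (2 * pi * t)"
    unfolding Tplus_def rho_def by blast
  have t1: "-1/4 \<le> t" "t \<le> 1/4" using t(1) by auto
  have "2*pi*(-1/4) \<le> 2*pi*t" by (rule mult_left_mono) (use t1 pi_gt_zero in auto)
  then have h1: "-(pi/2) \<le> 2 * pi * t" by simp
  have "2*pi*t \<le> 2*pi*(1/4)" by (rule mult_left_mono) (use t1 pi_gt_zero in auto)
  then have h2: "2 * pi * t \<le> pi/2" by simp
  have "Re w = cos (2 * pi * t)" using t(2) by simp
  then show ?thesis using cos_ge_zero[OF h1 h2] by simp
qed

lemma Tplus_I: assumes "cmod w = 1" "Re w > 0" shows "w \<in> Tplus"
proof -
  define a where "a = Arg w"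
  have w0: "w \<noteq> 0" using assms by auto
  have cw: "cis a = w" using cis_Arg[OF w0] assms(1) unfolding a_def by (simp add: sgn_eq)
  have ab: "-pi < a" "a \<le> pi" using Arg_bounded unfolding a_def by auto
  have "Re (cis a) = cos a" by simp
  then have ca: "cos a > 0" using assms(2) cw by simp
  have "a \<le> pi/2"
  proof (rule ccontr)
    assume "\<not> a \<le> pi/2"
    then have "cos a < 0" using ab by (intro cos_lt_zero_pi) auto
    then show False using ca by simp
  qed
  moreover have "-(pi/2) \<le> a"
  proof (rule ccontr)
    assume "\<not> -(pi/2) \<le> a"
    then have "cos (-a) < 0" using ab by (intro cos_lt_zero_pi) auto
    then show False using ca by simp
  qed
  ultimately have "a / (2*pi) \<in> {-1/4..1/4}" using pi_gt_zero by (auto simp: field_simps)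
  moreover have "rho (a / (2*pi)) = w" unfolding rho_def using cw by simp
  ultimately show ?thesis unfolding Tplus_def by (metis image_eqI)
qed

lemma small_Tplus: assumes "cmod z = 1" "cmod (z - 1) < 1" shows "z \<in> Tplus"
proof -
  have "\<bar>Re (z - 1)\<bar> < 1" using abs_Re_le_cmod[of "z - 1"] assms(2) by linarith
  then have "Re z > 0" by simp
  then show ?thesis using Tplus_I assms(1) by blast
qed

lemma pow_bound: assumes "cmod z = 1" shows "cmod (z ^ k - 1) \<le> real k * cmod (z - 1)"
proof (induction k)
  case 0 then show ?case by simp
next
  case (Suc k)
  have "z ^ Suc k - 1 = z * (z ^ k - 1) + (z - 1)" by (simp add: algebra_simps)
  then have "cmod (z ^ Suc k - 1) \<le> cmod (z * (z ^ k - 1)) + cmod (z - 1)"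
    by (metis norm_triangle_ineq)
  also have "cmod (z * (z ^ k - 1)) = cmod (z ^ k - 1)" using assms by (simp add: norm_mult)
  finally show ?case using Suc.IH by (simp add: algebra_simps)
qed

lemma arg_small:
  assumes n: "n \<ge> 1" and c: "\<forall>k\<in>{1..n}. cos (real k * \<theta>) \<ge> 0" and b: "\<bar>\<theta>\<bar> \<le> pi"
  shows "\<bar>\<theta>\<bar> \<le> pi / (2 * real n)"
proof (rule ccontr)
  assume "\<not> \<bar>\<theta>\<bar> \<le> pi / (2 * real n)"
  define a where "a = \<bar>\<theta>\<bar>"
  have an: "pi / (2 * real n) < a" using \<open>\<not> _\<close> unfolding a_def by simp
  have "pi / (2 * real n) > 0" using n by simp
  then have a0: "a > 0" using an by linarith
  have n0: "2 * real n > 0" using n by simp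
  have a2: "2 * a > 0" using a0 by simp
  define r where "r = pi / (2 * a)"
  have r0: "r \<ge> 0" unfolding r_def using a0 by simp
  define m where "m = nat \<lfloor>r\<rfloor>"
  have fl0: "\<lfloor>r\<rfloor> \<ge> 0" using r0 by simp
  have meq: "real m = of_int \<lfloor>r\<rfloor>" unfolding m_def using fl0 by simp
  have m1: "real m \<le> r" using meq of_int_floor_le[of r] by linarith
  have m2: "r < real m + 1" using meq real_of_int_floor_add_one_gt[of r] by linarith
  have "pi < a * (2 * real n)" using an pos_divide_less_eq[OF n0] by blast
  then have "pi < real n * (2 * a)" by (simp add: algebra_simps)
  then have "r < real n" unfolding r_def using pos_divide_less_eq[OF a2] by blast
  then have "real m < real n" using m1 by linarith
  then have mn: "m + 1 \<le> n" by simp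
  have "pi < (real m + 1) * (2 * a)" using m2 unfolding r_def using pos_divide_less_eq[OF a2] by blast
  then have k1: "pi / 2 < real (m + 1) * a" by (simp add: algebra_simps)
  have "real m * (2 * a) \<le> pi" using m1 unfolding r_def using pos_le_divide_eq[OF a2] by blast
  then have k2: "real m * a \<le> pi / 2" by (simp add: algebra_simps)
  have k3: "real (m + 1) * a \<le> pi"
  proof (cases "m = 0")
    case True then show ?thesis using b a_def by simp
  next
    case False
    then have "1 \<le> real m" by simp
    then have "1 * a \<le> real m * a" using a0 by (intro mult_right_mono) auto
    then show ?thesis using k2 by (simp add: algebra_simps)
  qed
  have "cos (real (m + 1) * a) < 0" using k1 k3 pi_gt_zero by (intro cos_lt_zero_pi) auto
  moreover have "cos (real (m + 1) * \<theta>) = cos (real (m + 1) * a)"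
  proof (cases "\<theta> \<ge> 0")
    case True then show ?thesis unfolding a_def by simp
  next
    case False
    then have "a = - \<theta>" unfolding a_def by simp
    then show ?thesis by (metis cos_minus minus_mult_right)
  qed
  moreover have "m + 1 \<in> {1..n}" using mn by simp
  then have "cos (real (m + 1) * \<theta>) \<ge> 0" using c by blast
  ultimately show False by simp
qed

lemma circle_close:
  assumes "e > 0"
  shows "\<exists>n\<ge>1. \<forall>z. cmod z = 1 \<and> (\<forall>k\<in>{1..n}. z ^ k \<in> Tplus) \<longrightarrow> cmod (z - 1) < e"
proof -
  have "continuous_on UNIV (\<lambda>x. cis x)" by (intro continuous_intros)
  then have "isCont cis 0" by (simp add: continuous_on_eq_continuous_at)
  then obtain d where d: "d > 0" "\<forall>t. dist t 0 < d \<longrightarrow> dist (cis t) (cis 0) < e"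
    using assms unfolding continuous_at_eps_delta by blast
  define n where "n = nat \<lceil>pi / (2 * d)\<rceil> + 1"
  have n1: "n \<ge> 1" unfolding n_def by simp
  have "pi / (2 * d) < real n" unfolding n_def by linarith
  then have nd: "pi / (2 * real n) < d" using d(1) n1 by (simp add: field_simps)
  show ?thesis
  proof (intro exI conjI allI impI)
    show "n \<ge> 1" by (rule n1)
    fix z assume z: "cmod z = 1 \<and> (\<forall>k\<in>{1..n}. z ^ k \<in> Tplus)"
    define \<theta> where "\<theta> = Arg z"
    have z0: "z \<noteq> 0" using z by auto
    have cz: "cis \<theta> = z" using cis_Arg[OF z0] z unfolding \<theta>_def by (simp add: sgn_eq)
    have "\<forall>k\<in>{1..n}. cos (real k * \<theta>) \<ge> 0"
    proof
      fix k assume "k \<in> {1..n}"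
      then have "Re (z ^ k) \<ge> 0" using z Tplus_Re by blast
      moreover have "z ^ k = cis (real k * \<theta>)" using cz Complex.DeMoivre[of \<theta> k] by simp
      ultimately show "cos (real k * \<theta>) \<ge> 0" by simp
    qed
    moreover have "\<bar>\<theta>\<bar> \<le> pi" using Arg_bounded[of z] unfolding \<theta>_def by auto
    ultimately have "\<bar>\<theta>\<bar> \<le> pi / (2 * real n)" using arg_small n1 by blast
    then have "dist \<theta> 0 < d" using nd by simp
    then have "dist (cis \<theta>) (cis 0) < e" using d by blast
    then show "cmod (z - 1) < e" using cz by (simp add: dist_norm)
  qed
qed

lemma char_facts:
  assumes "\<phi> \<in> characters conv"
  shows "cmod (\<phi> x) = 1" "\<phi> 0 = 1" "\<phi> x = \<phi> (x - y) * \<phi> y"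
proof -
  have c: "\<forall>x. \<phi> x \<in> circleT" and h: "\<forall>x y. \<phi> (x + y) = \<phi> x * \<phi> y"
    using assms unfolding characters_def by auto
  show c1: "cmod (\<phi> x) = 1" using c unfolding circleT_def by simp
  have "cmod (\<phi> 0) = 1" using c unfolding circleT_def by simp
  then have nz: "\<phi> 0 \<noteq> 0" by auto
  have "\<phi> 0 = \<phi> 0 * \<phi> 0" using h[rule_format, of 0 0] by simp
  then show "\<phi> 0 = 1" using nz by (metis mult_cancel_left2)
  show "\<phi> x = \<phi> (x - y) * \<phi> y" using h[rule_format, of "x - y" y] by simp
qed

lemma diff_char:
  assumes "\<phi> \<in> characters conv"
  shows "cmod (\<phi> y - \<phi> x) = cmod (\<phi> (y - x) - 1)"
proof -
  have "\<phi> y - \<phi> x = (\<phi> (y - x) - 1) * \<phi> x"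
    using char_facts(3)[OF assms, of y x] by (simp add: algebra_simps)
  then show ?thesis using char_facts(1)[OF assms, of x] by (simp add: norm_mult)
qed

lemma quot_bound:
  fixes x y a b :: complex
  assumes "cmod y = 1" "cmod b = 1" "cmod a = 1"
  shows "cmod (x / y - a / b) \<le> cmod (x - a) + cmod (y - b)"
proof -
  have y0: "y \<noteq> 0" and b0: "b \<noteq> 0" using assms by auto
  have "x / y - a / b = ((x - a) * b + a * (b - y)) / (y * b)"
    using y0 b0 by (simp add: field_simps)
  then have "cmod (x / y - a / b) = cmod ((x - a) * b + a * (b - y))"
    using assms by (simp add: norm_divide norm_mult)
  also have "\<dots> \<le> cmod ((x - a) * b) + cmod (a * (b - y))" by (rule norm_triangle_ineq)
  also have "\<dots> = cmod (x - a) + cmod (y - b)"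
    using assms by (simp add: norm_mult norm_minus_commute)
  finally show ?thesis .
qed

lemma ob_elim:
  assumes "y \<in> ob H x e"
  obtains e' where "0 \<le> e'" "e' < e" "\<forall>\<phi>\<in>H. cmod (\<phi> y - \<phi> x) \<le> e'"
proof -
  have "\<exists>e'. 0 \<le> e' \<and> e' < e \<and> (\<forall>\<phi>\<in>H. cmod (\<phi> y - \<phi> x) \<le> e')"
    using assms unfolding ob_def by (rule CollectD)
  then show ?thesis using that by blast
qed

lemma ob_intro:
  assumes "0 \<le> e'" "e' < e" "\<forall>\<phi>\<in>H. cmod (\<phi> y - \<phi> x) \<le> e'"
  shows "y \<in> ob H x e"
  unfolding ob_def using assms by (intro CollectI exI[of _ e']) simp

lemma HT_group:
  assumes HC: "H \<subseteq> characters conv"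
  shows "group_topology (HT H)"
  unfolding group_topology_def
proof (intro conjI)
  show "topspace (HT H) = UNIV" by simp
  show "continuous_map (prod_topology (HT H) (HT H)) (HT H) (\<lambda>(x, y). x - y)"
    unfolding continuous_map_def
  proof (intro conjI allI impI)
    show "(\<lambda>(x, y). x - y) \<in> topspace (prod_topology (HT H) (HT H)) \<rightarrow> topspace (HT H)" by simp
    fix U assume U: "openin (HT H) U"
    show "openin (prod_topology (HT H) (HT H))
           {p \<in> topspace (prod_topology (HT H) (HT H)). (case p of (x, y) \<Rightarrow> x - y) \<in> U}"
      unfolding openin_prod_topology_alt
    proof (intro allI impI)
      fix a b assume ab: "(a, b) \<in> {p \<in> topspace (prod_topology (HT H) (HT H)). (case p of (x, y) \<Rightarrow> x - y) \<in> U}"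
      then have "a - b \<in> U" by simp
      then obtain e where e: "e > 0" "ob H (a - b) e \<subseteq> U"
        using Hopen_nhd[OF U[unfolded openin_HT] \<open>a - b \<in> U\<close>] by blast
      have e2: "e / 2 > 0" using e by simp
      show "\<exists>U' V'. openin (HT H) U' \<and> openin (HT H) V' \<and> a \<in> U' \<and> b \<in> V' \<and>
              U' \<times> V' \<subseteq> {p \<in> topspace (prod_topology (HT H) (HT H)). (case p of (x, y) \<Rightarrow> x - y) \<in> U}"
      proof (intro exI conjI)
        show "openin (HT H) (ob H a (e/2))" "openin (HT H) (ob H b (e/2))"
          by (simp_all add: openin_HT ob_open)
        show "a \<in> ob H a (e/2)" by (rule ob_center[OF e2])
        show "b \<in> ob H b (e/2)" by (rule ob_center[OF e2])
        show "ob H a (e / 2) \<times> ob H b (e / 2)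
              \<subseteq> {p \<in> topspace (prod_topology (HT H) (HT H)). (case p of (x, y) \<Rightarrow> x - y) \<in> U}"
        proof (rule subrelI)
          fix x y assume xy: "(x, y) \<in> ob H a (e / 2) \<times> ob H b (e / 2)"
          then have xa: "x \<in> ob H a (e / 2)" and yb: "y \<in> ob H b (e / 2)" by auto
          obtain e1 where e1: "0 \<le> e1" "e1 < e/2" "\<forall>\<phi>\<in>H. cmod (\<phi> x - \<phi> a) \<le> e1"
            using ob_elim[OF xa] by blast
          obtain e2 where e2': "0 \<le> e2" "e2 < e/2" "\<forall>\<phi>\<in>H. cmod (\<phi> y - \<phi> b) \<le> e2"
            using ob_elim[OF yb] by blast
          have "\<forall>\<phi>\<in>H. cmod (\<phi> (x - y) - \<phi> (a - b)) \<le> e1 + e2"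
          proof
            fix \<phi> assume p: "\<phi> \<in> H"
            then have pc: "\<phi> \<in> characters conv" using HC by blast
            have q1: "\<phi> (x - y) = \<phi> x / \<phi> y"
              using char_facts(3)[OF pc, of x y] char_facts(1)[OF pc, of y] by (auto simp: field_simps)
            have q2: "\<phi> (a - b) = \<phi> a / \<phi> b"
              using char_facts(3)[OF pc, of a b] char_facts(1)[OF pc, of b] by (auto simp: field_simps)
            have "cmod (\<phi> (x - y) - \<phi> (a - b)) \<le> cmod (\<phi> x - \<phi> a) + cmod (\<phi> y - \<phi> b)"
              unfolding q1 q2 by (rule quot_bound) (simp_all add: char_facts(1)[OF pc])
            moreover have "cmod (\<phi> x - \<phi> a) \<le> e1" using e1(3) p by blast
            moreover have "cmod (\<phi> y - \<phi> b) \<le> e2" using e2'(3) p by blast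
            ultimately show "cmod (\<phi> (x - y) - \<phi> (a - b)) \<le> e1 + e2" by linarith
          qed
          moreover have "0 \<le> e1 + e2" using e1 e2' by linarith
          moreover have "e1 + e2 < e" using e1 e2' by linarith
          ultimately have "x - y \<in> ob H (a - b) e" by (intro ob_intro) auto
          then show "(x, y) \<in> {p \<in> topspace (prod_topology (HT H) (HT H)). (case p of (x, y) \<Rightarrow> x - y) \<in> U}"
            using e(2) by auto
        qed
      qed
    qed
  qed
qed

lemma HT_lqc:
  assumes HC: "H \<subseteq> characters conv"
  shows "locally_quasi_convex (HT H)"
  unfolding locally_quasi_convex_def
proof (intro allI impI)
  fix U assume "zero_nhd (HT H) U"
  then obtain W where W: "openin (HT H) W" "0 \<in> W" "W \<subseteq> U" unfolding zero_nhd_def by blast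
  obtain e where e: "e > 0" "ob H 0 e \<subseteq> W" using Hopen_nhd[OF W(1)[unfolded openin_HT] W(2)] by blast
  have "e/2 > 0" using e by simp
  then obtain n where n: "n \<ge> 1"
    and cl: "\<forall>z. cmod z = 1 \<and> (\<forall>k\<in>{1..n}. z ^ k \<in> Tplus) \<longrightarrow> cmod (z - 1) < e/2"
    using circle_close by blast
  define V where "V = {x. \<forall>\<phi>\<in>H. \<forall>k\<in>{1..n}. \<phi> x ^ k \<in> Tplus}"
  show "\<exists>V. zero_nhd (HT H) V \<and> quasi_convex (HT H) V \<and> V \<subseteq> U"
  proof (intro exI conjI)
    show "V \<subseteq> U"
    proof
      fix x assume "x \<in> V"
      have "\<forall>\<phi>\<in>H. cmod (\<phi> x - \<phi> 0) \<le> e/2"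
      proof
        fix \<phi> assume p: "\<phi> \<in> H"
        then have pc: "\<phi> \<in> characters conv" using HC by blast
        have "\<forall>k\<in>{1..n}. \<phi> x ^ k \<in> Tplus" using \<open>x \<in> V\<close> p unfolding V_def by blast
        then have "cmod (\<phi> x - 1) < e/2" using cl char_facts(1)[OF pc, of x] by blast
        then show "cmod (\<phi> x - \<phi> 0) \<le> e/2" using char_facts(2)[OF pc] by simp
      qed
      then have "x \<in> ob H 0 e" by (rule ob_intro[rotated 2]) (use e in auto)
      then show "x \<in> U" using e(2) W(3) by blast
    qed
    show "zero_nhd (HT H) V" unfolding zero_nhd_def
    proof (intro exI conjI)
      show "openin (HT H) (ob H 0 (1 / real n))" by (simp add: openin_HT ob_open)
      show "0 \<in> ob H 0 (1 / real n)" using n by (intro ob_center) simp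
      show "ob H 0 (1 / real n) \<subseteq> V"
      proof
        fix x assume "x \<in> ob H 0 (1 / real n)"
        then obtain e' where e': "0 \<le> e'" "e' < 1 / real n" "\<forall>\<phi>\<in>H. cmod (\<phi> x - \<phi> 0) \<le> e'"
          by (rule ob_elim)
        have "real n * e' < 1" using e'(2) n by (simp add: field_simps)
        show "x \<in> V" unfolding V_def
        proof (intro CollectI ballI)
          fix \<phi> k assume p: "\<phi> \<in> H" and k: "k \<in> {1..n}"
          then have pc: "\<phi> \<in> characters conv" using HC by blast
          have c1: "cmod (\<phi> x) = 1" by (rule char_facts(1)[OF pc])
          have "cmod (\<phi> x - 1) \<le> e'" using e'(3) p char_facts(2)[OF pc] by force
          have "cmod (\<phi> x ^ k - 1) \<le> real k * cmod (\<phi> x - 1)" by (rule pow_bound[OF c1])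
          also have "\<dots> \<le> real n * e'"
            using \<open>cmod (\<phi> x - 1) \<le> e'\<close> k e'(1) by (intro mult_mono) auto
          also have "\<dots> < 1" by fact
          finally have "cmod (\<phi> x ^ k - 1) < 1" .
          moreover have "cmod (\<phi> x ^ k) = 1" using c1 by (simp add: norm_power)
          ultimately show "\<phi> x ^ k \<in> Tplus" using small_Tplus by blast
        qed
      qed
    qed
    show "quasi_convex (HT H) V" unfolding quasi_convex_def
    proof (intro allI impI)
      fix x assume "x \<notin> V"
      then obtain \<phi> k where p: "\<phi> \<in> H" and k: "k \<in> {1..n}" and nx: "\<phi> x ^ k \<notin> Tplus"
        unfolding V_def by blast
      have pc: "\<phi> \<in> characters conv" using HC p by blast
      define \<psi> where "\<psi> = (\<lambda>y. \<phi> y ^ k)"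
      have "\<psi> \<in> characters (top_conv (HT H))" unfolding characters_def
      proof (intro CollectI conjI allI impI)
        fix y show "\<psi> y \<in> circleT" unfolding \<psi>_def circleT_def
          using char_facts(1)[OF pc, of y] by (simp add: norm_power)
      next
        fix y z show "\<psi> (y + z) = \<psi> y * \<psi> z" unfolding \<psi>_def
          using pc unfolding characters_def by (simp add: power_mult_distrib)
      next
        fix F y assume "top_conv (HT H) F y"
        then have "limitin (HT H) (\<lambda>y. y) y F" unfolding top_conv_def .
        then have "(\<phi> \<longlongrightarrow> \<phi> y) F" using p by (rule limitin_HT)
        then show "(\<psi> \<longlongrightarrow> \<psi> y) F" unfolding \<psi>_def by (intro tendsto_power)
      qed
      moreover have "\<psi> ` V \<subseteq> Tplus" unfolding \<psi>_def V_def using p k by blast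
      moreover have "\<psi> x \<notin> Tplus" unfolding \<psi>_def using nx .
      ultimately show "\<exists>\<phi>\<in>characters (top_conv (HT H)). \<phi> ` V \<subseteq> Tplus \<and> \<phi> x \<notin> Tplus" by blast
    qed
  qed
qed

lemma HT_coarser:
  assumes G: "conv_group conv" and E: "equicontinuous_set conv H"
  shows "coarser_than_conv conv (HT H)"
  unfolding coarser_than_conv_def
proof (intro allI impI)
  fix F x assume Fx: "conv F x"
  have HC: "H \<subseteq> characters conv" using E unfolding equicontinuous_set_def by blast
  have eq0: "\<forall>F. conv F 0 \<longrightarrow> (\<forall>U. open U \<and> 1 \<in> U \<longrightarrow>
      (\<exists>A. eventually (\<lambda>x. x \<in> A) F \<and> {\<phi> x | \<phi> x. \<phi> \<in> H \<and> x \<in> A} \<subseteq> U))"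
    using E unfolding equicontinuous_set_def by (rule conjunct2)
  have px: "conv (principal {x}) x" using G unfolding conv_group_def by blast
  have sub: "\<forall>F G x y. conv F x \<and> conv G y \<longrightarrow>
        conv (filtermap (\<lambda>(a, b). a - b) (F \<times>\<^sub>F G)) (x - y)"
    using G unfolding conv_group_def by blast
  have "conv (filtermap (\<lambda>(a, b). a - b) (F \<times>\<^sub>F principal {x})) (x - x)"
    using sub Fx px by blast
  then have G0: "conv (filtermap (\<lambda>(a, b). a - b) (F \<times>\<^sub>F principal {x})) 0" by simp
  show "limitin (HT H) (\<lambda>y. y) x F" unfolding limitin_def
  proof (intro conjI allI impI)
    show "x \<in> topspace (HT H)" by simp
    fix U assume U: "openin (HT H) U \<and> x \<in> U"
    have U1: "Hopen H U" using U openin_HT by blast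
    have U2: "x \<in> U" using U by blast
    obtain e where e: "e > 0" "ob H x e \<subseteq> U" using Hopen_nhd[OF U1 U2] by blast
    have "open (ball (1::complex) (e/2)) \<and> 1 \<in> ball (1::complex) (e/2)" using e by simp
    then obtain A where A: "eventually (\<lambda>z. z \<in> A) (filtermap (\<lambda>(a, b). a - b) (F \<times>\<^sub>F principal {x}))"
      and AU: "{\<phi> z | \<phi> z. \<phi> \<in> H \<and> z \<in> A} \<subseteq> ball 1 (e/2)"
      using eq0 G0 by blast
    have "eventually (\<lambda>p. (case p of (a, b) \<Rightarrow> a - b) \<in> A) (F \<times>\<^sub>F principal {x})"
      using A by (simp add: eventually_filtermap)
    then obtain Pf Pg where Pf: "eventually Pf F" and Pg: "eventually Pg (principal {x})"
      and P: "\<forall>a b. Pf a \<longrightarrow> Pg b \<longrightarrow> (case (a, b) of (a, b) \<Rightarrow> a - b) \<in> A"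
      unfolding eventually_prod_filter by blast
    have "Pg x" using Pg by (simp add: eventually_principal)
    then have evA: "eventually (\<lambda>a. a - x \<in> A) F"
      using Pf P by (auto elim: eventually_mono)
    show "eventually (\<lambda>y. y \<in> U) F"
    proof (rule eventually_mono[OF evA])
      fix a assume aA: "a - x \<in> A"
      have "\<forall>\<phi>\<in>H. cmod (\<phi> a - \<phi> x) \<le> e/2"
      proof
        fix \<phi> assume p: "\<phi> \<in> H"
        then have pc: "\<phi> \<in> characters conv" using HC by blast
        have "\<phi> (a - x) \<in> ball 1 (e/2)" using AU p aA by blast
        then have "cmod (\<phi> (a - x) - 1) < e/2" by (simp add: dist_norm norm_minus_commute)
        then show "cmod (\<phi> a - \<phi> x) \<le> e/2" using diff_char[OF pc, of a x] by simp
      qed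
      then have "a \<in> ob H x e" by (rule ob_intro[rotated 2]) (use e in auto)
      then show "a \<in> U" using e(2) by blast
    qed
  qed
qed

theorem proposition2p11:
  fixes conv :: "'a::ab_group_add filter \<Rightarrow> 'a \<Rightarrow> bool"
    and T :: "'a topology"
    and H :: "('a \<Rightarrow> complex) set"
  assumes "conv_group conv"
    and "lqc_modification conv T"
  shows "equicontinuous_set conv H \<longleftrightarrow> equicontinuous_set (top_conv T) H"
proof
  have L: "lqc_modification conv T" by fact
  have coarse: "\<forall>F x. conv F x \<longrightarrow> limitin T (\<lambda>y. y) x F"
    using L unfolding lqc_modification_def coarser_than_conv_def by blast
  have maxT: "\<forall>T'. group_topology T' \<and> locally_quasi_convex T' \<and> coarser_than_conv conv T'
           \<longrightarrow> (\<forall>U. openin T' U \<longrightarrow> openin T U)"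
    using L unfolding lqc_modification_def by blast
  {
    assume E: "equicontinuous_set conv H"
    have HC: "H \<subseteq> characters conv" using E unfolding equicontinuous_set_def by blast
    have op: "\<forall>U. openin (HT H) U \<longrightarrow> openin T U"
      using maxT HT_group[OF HC] HT_lqc[OF HC] HT_coarser[OF assms(1) E] by blast
    have lim: "limitin (HT H) (\<lambda>y. y) x F" if "limitin T (\<lambda>y. y) x F" for x F
      using that op unfolding limitin_def by simp
    show "equicontinuous_set (top_conv T) H" unfolding equicontinuous_set_def
    proof (intro conjI allI impI)
      show "H \<subseteq> characters (top_conv T)"
      proof
        fix \<phi> assume p: "\<phi> \<in> H"
        then have pc: "\<phi> \<in> characters conv" using HC by blast
        show "\<phi> \<in> characters (top_conv T)" unfolding characters_def
        proof (intro CollectI conjI allI impI)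
          fix x show "\<phi> x \<in> circleT" using pc unfolding characters_def by blast
        next
          fix x y show "\<phi> (x + y) = \<phi> x * \<phi> y" using pc unfolding characters_def by blast
        next
          fix F x assume "top_conv T F x"
          then have "limitin (HT H) (\<lambda>y. y) x F" unfolding top_conv_def by (rule lim)
          then show "(\<phi> \<longlongrightarrow> \<phi> x) F" using p by (rule limitin_HT)
        qed
      qed
    next
      fix F and U :: "complex set" assume F: "top_conv T F 0" and U: "open U \<and> 1 \<in> U"
      then obtain e where e: "e > 0" "ball 1 e \<subseteq> U" using open_contains_ball by blast
      have "limitin (HT H) (\<lambda>y. y) 0 F" using F unfolding top_conv_def by (rule lim)
      moreover have "openin (HT H) (ob H 0 e)" by (simp add: openin_HT ob_open)
      moreover have "0 \<in> ob H 0 e" by (rule ob_center[OF e(1)])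
      ultimately have ev: "eventually (\<lambda>y. y \<in> ob H 0 e) F" unfolding limitin_def by blast
      have "{\<phi> x | \<phi> x. \<phi> \<in> H \<and> x \<in> ob H 0 e} \<subseteq> U"
      proof
        fix w assume "w \<in> {\<phi> x | \<phi> x. \<phi> \<in> H \<and> x \<in> ob H 0 e}"
        then obtain \<phi> x where w: "w = \<phi> x" and p: "\<phi> \<in> H" and x: "x \<in> ob H 0 e" by blast
        obtain e' where e': "0 \<le> e'" "e' < e" "\<forall>\<phi>\<in>H. cmod (\<phi> x - \<phi> 0) \<le> e'"
          using ob_elim[OF x] by blast
        have pc: "\<phi> \<in> characters conv" using HC p by blast
        have "cmod (\<phi> x - 1) \<le> e'" using e'(3) p char_facts(2)[OF pc] by force
        then have "w \<in> ball 1 e" using w e'(2) by (simp add: dist_norm norm_minus_commute)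
        then show "w \<in> U" using e(2) by blast
      qed
      then show "\<exists>A. eventually (\<lambda>x. x \<in> A) F \<and> {\<phi> x | \<phi> x. \<phi> \<in> H \<and> x \<in> A} \<subseteq> U"
        using ev by blast
    qed
  }
  {
    assume E: "equicontinuous_set (top_conv T) H"
    have HC: "H \<subseteq> characters (top_conv T)" using E unfolding equicontinuous_set_def by blast
    have eq0: "\<forall>F. top_conv T F 0 \<longrightarrow> (\<forall>U. open U \<and> 1 \<in> U \<longrightarrow>
      (\<exists>A. eventually (\<lambda>x. x \<in> A) F \<and> {\<phi> x | \<phi> x. \<phi> \<in> H \<and> x \<in> A} \<subseteq> U))"
      using E unfolding equicontinuous_set_def by (rule conjunct2)
    have cc: "characters (top_conv T) \<subseteq> characters conv"
      unfolding characters_def top_conv_def using coarse by blast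
    show "equicontinuous_set conv H" unfolding equicontinuous_set_def
    proof (intro conjI allI impI)
      show "H \<subseteq> characters conv" using HC cc by blast
    next
      fix F and U :: "complex set" assume "conv F 0" "open U \<and> 1 \<in> U"
      moreover have "top_conv T F 0" using coarse \<open>conv F 0\<close> unfolding top_conv_def by blast
      ultimately show "\<exists>A. eventually (\<lambda>x. x \<in> A) F \<and> {\<phi> x | \<phi> x. \<phi> \<in> H \<and> x \<in> A} \<subseteq> U"
        using eq0 by blast
    qed
  }
qed

end
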